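(* Every locally Hamiltonian form on the momentum phase space $V^*Q$ is locally a Hamiltonian form modulo closed forms: if $H$ is a 1-form on $V^*Q$ with $dH=\gamma\rfloor\mathbf{\Omega}$ for some canonical connection $\gamma$ on $V^*Q\to\mathbb{R}$, then every point of $V^*Q$ has an open neighbourhood $U$ and a smooth function $\mathcal{H}$ on $U$ such that $H-(p_i\,dq^i-\mathcal{H}\,dt)$ is a closed form on $U$.
   Context: Let $Q\to\mathbb{R}$ be a smooth fibre bundle over the time axis $\mathbb{R}$ (Cartesian coordinate $t$, transition functions $t'=t+\mathrm{const}$) with bundle coordinates $(t,q^i)$. The momentum phase space (Legendre bundle) $V^*Q\to\mathbb{R}$ is the vertical cotangent bundle of $Q\to\mathbb{R}$, with holonomic coordinates $(t,q^i,p_i)$; write $\partial_i=\partial/\partial q^i$, $\partial^i=\partial/\partial p_i$; it carries the canonical 3-form $\mathbf{\Omega}=dp_i\wedge dq^i\wedge dt$. A connection on $V^*Q\to\mathbb{R}$ is a vector field $\gamma=\partial_t+\gamma^i\partial_i+\gamma_i\partial^i$; it is canonical if $\gamma\rfloor\mathbf{\Omega}$ is closed. A locally Hamiltonian form is a 1-form $H$ on $V^*Q$ with $dH=\gamma\rfloor\mathbf{\Omega}$ for some canonical connection $\gamma$. The cotangent bundle $T^*Q$ has coordinates $(t,q^i,p_i,p)$ and Liouville form $\Xi=p\,dt+p_i\,dq^i$; $\zeta:T^*Q\to V^*Q$ is the canonical projection. A Hamiltonian form is the pull-back $h^*\Xi$ by a section $h$ of $\zeta$; in coordinates it reads $p_i\,dq^i-\mathcal{H}\,dt$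 with $\mathcal{H}=-p\circ h$ (a local Hamiltonian form is the same on an open subset). *)

theory Defs
  imports "HOL-Analysis.Analysis"
begin

text \<open>Coordinates on a bundle chart of the momentum phase space V*Q: a point is
 (t, q, p) with t real, q = (q^i), p = (p_i) in real^'n.  Tangent vectors have the
 same shape.  A 1-form is represented as a covector field  x |-> omega x  acting on
 tangent vectors by the inner product (components (H_t, H_{q^i}, H^{p_i})).
 Exterior derivatives use the determinant convention
 (a wedge b)(u,v) = a(u)b(v) - a(v)b(u).\<close>

type_synonym 'n vs = "real \<times> (real ^ 'n) \<times> (real ^ 'n)"

fun iter_dderiv :: "('a::real_normed_vector \<Rightarrow> 'b::real_normed_vector) \<Rightarrow> 'a list \<Rightarrow> 'a \<Rightarrow> 'b" where
  "iter_dderiv f [] = f"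
| "iter_dderiv f (v # vs) = (\<lambda>x. frechet_derivative (iter_dderiv f vs) (at x) v)"

definition smooth_on :: "'a::real_normed_vector set \<Rightarrow> ('a \<Rightarrow> 'b::real_normed_vector) \<Rightarrow> bool" where
  "smooth_on U f \<longleftrightarrow> (\<forall>vs. \<forall>x\<in>U. iter_dderiv f vs differentiable (at x))"

definition dt :: "'n::finite vs \<Rightarrow> real" where "dt u = fst u"
definition dq :: "'n::finite \<Rightarrow> 'n vs \<Rightarrow> real" where "dq i u = fst (snd u) $ i"
definition dp :: "'n::finite \<Rightarrow> 'n vs \<Rightarrow> real" where "dp i u = snd (snd u) $ i"

definition wedge3 :: "('a \<Rightarrow> real) \<Rightarrow> ('a \<Rightarrow> real) \<Rightarrow> ('a \<Rightarrow> real) \<Rightarrow> 'a \<Rightarrow> 'a \<Rightarrow> 'a \<Rightarrow> real" where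
  "wedge3 a b c u v w =
     a u * b v * c w - a u * b w * c v - a v * b u * c w
   + a v * b w * c u + a w * b u * c v - a w * b v * c u"

definition Omega :: "'n::finite vs \<Rightarrow> 'n vs \<Rightarrow> 'n vs \<Rightarrow> real" where
  "Omega u v w = (\<Sum>i\<in>UNIV. wedge3 (dp i) (dq i) dt u v w)"

definition d1 :: "('a::real_inner \<Rightarrow> 'a) \<Rightarrow> 'a \<Rightarrow> 'a \<Rightarrow> 'a \<Rightarrow> real" where
  "d1 \<omega> x u v = frechet_derivative \<omega> (at x) u \<bullet> v - frechet_derivative \<omega> (at x) v \<bullet> u"

definition closed1 :: "'a::real_inner set \<Rightarrow> ('a \<Rightarrow> 'a) \<Rightarrow> bool" where
  "closed1 U \<omega> \<longleftrightarrow> (\<forall>x\<in>U. \<forall>u v. d1 \<omega> x u v = 0)"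

definition d2 :: "('a::real_normed_vector \<Rightarrow> 'a \<Rightarrow> 'a \<Rightarrow> real) \<Rightarrow> 'a \<Rightarrow> 'a \<Rightarrow> 'a \<Rightarrow> 'a \<Rightarrow> real" where
  "d2 \<beta> x u v w =
     frechet_derivative (\<lambda>y. \<beta> y v w) (at x) u
   - frechet_derivative (\<lambda>y. \<beta> y u w) (at x) v
   + frechet_derivative (\<lambda>y. \<beta> y u v) (at x) w"

definition contr_Omega :: "('n::finite vs \<Rightarrow> 'n vs) \<Rightarrow> 'n vs \<Rightarrow> 'n vs \<Rightarrow> 'n vs \<Rightarrow> real" where
  "contr_Omega \<gamma> x u v = Omega (\<gamma> x) u v"

text \<open>connection on V*Q -> R over W: smooth vector field gamma = d_t + gamma^i d_i + gamma_i d^i\<close>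
definition connection_on :: "'n::finite vs set \<Rightarrow> ('n vs \<Rightarrow> 'n vs) \<Rightarrow> bool" where
  "connection_on W \<gamma> \<longleftrightarrow> smooth_on W \<gamma> \<and> (\<forall>x\<in>W. fst (\<gamma> x) = 1)"

definition canonical_connection_on :: "'n::finite vs set \<Rightarrow> ('n vs \<Rightarrow> 'n vs) \<Rightarrow> bool" where
  "canonical_connection_on W \<gamma> \<longleftrightarrow> connection_on W \<gamma> \<and>
     (\<forall>x\<in>W. \<forall>u v w. d2 (contr_Omega \<gamma>) x u v w = 0)"

definition locally_hamiltonian_form_on :: "'n::finite vs set \<Rightarrow> ('n vs \<Rightarrow> 'n vs) \<Rightarrow> bool" where
  "locally_hamiltonian_form_on W H \<longleftrightarrow> smooth_on W H \<and>
     (\<exists>\<gamma>. canonical_connection_on W \<gamma> \<and> (\<forall>x\<in>W. \<forall>u v. d1 H x u v = contr_Omega \<gamma> x u v))"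

text \<open>the (local) Hamiltonian form  p_i dq^i - \<H> dt  as a covector field\<close>
definition ham_form :: "('n::finite vs \<Rightarrow> real) \<Rightarrow> 'n vs \<Rightarrow> 'n vs" where
  "ham_form \<H> x = (- \<H> x, snd (snd x), 0)"

end

theory Submission
  imports Defs
begin


lemma fd_cong:
  assumes "open U" "x \<in> U" "\<And>y. y \<in> U \<Longrightarrow> f y = g y"
  shows "frechet_derivative f (at x) = frechet_derivative g (at x)"
proof -
  have "\<And>D. (f has_derivative D) (at x) \<longleftrightarrow> (g has_derivative D) (at x)"
    using assms by (metis has_derivative_transform_within_open)
  then show ?thesis unfolding frechet_derivative_def by simp
qed

lemma diff_cong:
  assumes "open U" "x \<in> U" "\<And>y. y \<in> U \<Longrightarrow> f y = g y"
  shows "f differentiable (at x) \<longleftrightarrow> g differentiable (at x)"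
  using assms unfolding differentiable_def by (metis has_derivative_transform_within_open)

lemma iter_cong:
  assumes "open U" "\<And>y. y \<in> U \<Longrightarrow> f y = g y"
  shows "y \<in> U \<Longrightarrow> iter_dderiv f vs y = iter_dderiv g vs y"
proof (induction vs arbitrary: y)
  case Nil then show ?case using assms by simp
next
  case (Cons v vs)
  have "frechet_derivative (iter_dderiv f vs) (at y) = frechet_derivative (iter_dderiv g vs) (at y)"
    by (rule fd_cong[OF assms(1) Cons.prems]) (use Cons.IH in auto)
  then show ?case by simp
qed

lemma smooth_cong:
  assumes "open U" "\<And>y. y \<in> U \<Longrightarrow> f y = g y" "smooth_on U f"
  shows "smooth_on U g"
  unfolding smooth_on_def
proof (intro allI ballI)
  fix vs x assume x: "x \<in> U"
  have "iter_dderiv f vs differentiable (at x)" using assms(3) x unfolding smooth_on_def by auto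
  then show "iter_dderiv g vs differentiable (at x)"
    using diff_cong[OF assms(1) x iter_cong[OF assms(1,2)]] by auto
qed

lemma iter_snoc: "iter_dderiv f (vs @ [v]) = iter_dderiv (\<lambda>x. frechet_derivative f (at x) v) vs"
  by (induction vs) auto

lemma iter_append: "iter_dderiv (iter_dderiv f ws) vs = iter_dderiv f (vs @ ws)"
  by (induction vs) auto

lemma smooth_iter: "smooth_on U f \<Longrightarrow> smooth_on U (iter_dderiv f ws)"
  unfolding smooth_on_def iter_append by auto

lemma smooth_D: "smooth_on U f \<Longrightarrow> smooth_on U (\<lambda>x. frechet_derivative f (at x) v)"
  using smooth_iter[of U f "[v]"] by simp

lemma smooth_differentiable: "smooth_on U f \<Longrightarrow> x \<in> U \<Longrightarrow> f differentiable (at x)"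
  unfolding smooth_on_def by (metis iter_dderiv.simps(1))

lemma smooth_coinduct:
  assumes "open U" "Q f"
    and step: "\<And>f. Q f \<Longrightarrow> (\<forall>x\<in>U. f differentiable (at x)) \<and>
        (\<forall>v. \<exists>g. Q g \<and> (\<forall>x\<in>U. frechet_derivative f (at x) v = g x))"
  shows "smooth_on U f"
proof -
  have "\<forall>f. Q f \<longrightarrow> (\<forall>x\<in>U. iter_dderiv f vs differentiable (at x))" for vs
  proof (induction vs rule: rev_induct)
    case Nil then show ?case using step by simp
  next
    case (snoc v vs)
    show ?case
    proof (intro allI impI ballI)
      fix f x assume "Q f" "x \<in> U"
      then obtain g where g: "Q g" "\<forall>x\<in>U. frechet_derivative f (at x) v = g x" using step by blast
      have "iter_dderiv g vs differentiable (at x)" using snoc g \<open>x \<in> U\<close> by blast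
      then show "iter_dderiv f (vs @ [v]) differentiable (at x)"
        unfolding iter_snoc
        using diff_cong[OF assms(1) \<open>x \<in> U\<close> iter_cong[OF assms(1), of "\<lambda>x. frechet_derivative f (at x) v" g]] g
        by auto
    qed
  qed
  then show ?thesis using assms(2) unfolding smooth_on_def by auto
qed



lemma fd_at: "(f has_derivative f') (at x) \<Longrightarrow> frechet_derivative f (at x) v = f' v"
  using frechet_derivative_at by metis

lemma smooth_const:
  fixes c :: "'b::real_normed_vector"
  assumes "open U" shows "smooth_on U (\<lambda>x::'a::real_normed_vector. c)"
proof (rule smooth_coinduct[where Q="\<lambda>h::'a\<Rightarrow>'b. \<exists>c. h = (\<lambda>x. c)"])
  fix f :: "'a \<Rightarrow> 'b" assume "\<exists>c. f = (\<lambda>x. c)"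
  then obtain c where "f = (\<lambda>x. c)" by blast
  then show "(\<forall>x\<in>U. f differentiable at x) \<and> (\<forall>v. \<exists>g. (\<exists>c. g = (\<lambda>x. c)) \<and> (\<forall>x\<in>U. frechet_derivative f (at x) v = g x))"
    by (intro conjI allI exI[of _ "\<lambda>x. 0"]) auto
qed (use assms in auto)

lemma smooth_linear: fixes L :: "'a::real_normed_vector \<Rightarrow> 'b::real_normed_vector"
  assumes "open U" "bounded_linear L" shows "smooth_on U L"
proof (rule smooth_coinduct[where Q="\<lambda>h::'a\<Rightarrow>'b. (\<exists>c. h = (\<lambda>x. c)) \<or> bounded_linear h"])
  fix f :: "'a \<Rightarrow> 'b" assume "(\<exists>c. f = (\<lambda>x. c)) \<or> bounded_linear f"
  then show "(\<forall>x\<in>U. f differentiable at x) \<and> (\<forall>v. \<exists>g. ((\<exists>c. g = (\<lambda>x. c)) \<or> bounded_linear g) \<and> (\<forall>x\<in>U. frechet_derivative f (at x) v = g x))"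
  proof
    assume "\<exists>c. f = (\<lambda>x. c)" then show ?thesis by auto
  next
    assume l: "bounded_linear f"
    then have d: "(f has_derivative f) (at x)" for x by (rule bounded_linear_imp_has_derivative)
    show ?thesis
    proof (intro conjI allI ballI)
      fix x show "f differentiable at x" using d unfolding differentiable_def by blast
    next
      fix v show "\<exists>g. ((\<exists>c. g = (\<lambda>x. c)) \<or> bounded_linear g) \<and> (\<forall>x\<in>U. frechet_derivative f (at x) v = g x)"
        by (rule exI[of _ "\<lambda>x. f v"]) (auto simp add: fd_at[OF d])
    qed
  qed
qed (use assms in auto)

lemma smooth_lin_post:
  fixes L :: "'b::real_normed_vector \<Rightarrow> 'c::real_normed_vector" and f :: "'a::real_normed_vector \<Rightarrow> 'b"
  assumes "open U" "bounded_linear L" "smooth_on U f"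
  shows "smooth_on U (\<lambda>x. L (f x))"
proof (rule smooth_coinduct[where Q="\<lambda>h::'a\<Rightarrow>'c. \<exists>f. smooth_on U f \<and> (\<forall>x\<in>U. h x = L (f x))"])
  fix h :: "'a \<Rightarrow> 'c" assume "\<exists>f. smooth_on U f \<and> (\<forall>x\<in>U. h x = L (f x))"
  then obtain f where f: "smooth_on U f" "\<forall>x\<in>U. h x = L (f x)" by blast
  have hd: "(h has_derivative (\<lambda>v. L (frechet_derivative f (at x) v))) (at x)" if "x \<in> U" for x
  proof -
    have "f differentiable (at x)" using smooth_differentiable[OF f(1) that] .
    then have "((\<lambda>x. L (f x)) has_derivative (\<lambda>v. L (frechet_derivative f (at x) v))) (at x)"
      using bounded_linear.has_derivative[OF assms(2)] frechet_derivative_works by blast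
    then show ?thesis using has_derivative_transform_within_open[OF _ assms(1) that] f(2) by metis
  qed
  show "(\<forall>x\<in>U. h differentiable at x) \<and> (\<forall>v. \<exists>g. (\<exists>f. smooth_on U f \<and> (\<forall>x\<in>U. g x = L (f x))) \<and> (\<forall>x\<in>U. frechet_derivative h (at x) v = g x))"
  proof (intro conjI allI)
    show "\<forall>x\<in>U. h differentiable at x" using hd differentiable_def by blast
    fix v
    show "\<exists>g. (\<exists>f. smooth_on U f \<and> (\<forall>x\<in>U. g x = L (f x))) \<and> (\<forall>x\<in>U. frechet_derivative h (at x) v = g x)"
      apply (rule exI[of _ "\<lambda>x. L (frechet_derivative f (at x) v)"])
      using smooth_D[OF f(1)] hd fd_at by blast
  qed
qed (use assms in auto)

inductive QS :: "'a::real_normed_vector set \<Rightarrow> 'b::euclidean_space set \<Rightarrow> ('a \<Rightarrow> 'b) \<Rightarrow> ('a \<Rightarrow> real) \<Rightarrow> bool"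
  for U V g where
  sm: "smooth_on U f \<Longrightarrow> QS U V g f"
| cmp: "smooth_on V f \<Longrightarrow> QS U V g (\<lambda>x. f (g x))"
| add: "QS U V g a \<Longrightarrow> QS U V g b \<Longrightarrow> QS U V g (\<lambda>x. a x + b x)"
| mul: "QS U V g a \<Longrightarrow> QS U V g b \<Longrightarrow> QS U V g (\<lambda>x. a x * b x)"

lemma QS_sum:
  assumes "open U" "finite S" "\<And>i. i \<in> S \<Longrightarrow> QS U V g (F i)"
  shows "QS U V g (\<lambda>x. \<Sum>i\<in>S. F i x)"
  using assms(2,3)
proof (induction S rule: finite_induct)
  case empty
  have "QS U V g (\<lambda>x. 0)" by (rule QS.sm, rule smooth_const, rule assms(1))
  then show ?case by simp
next
  case (insert a S)
  then show ?case using QS.add[of U V g "F a" "\<lambda>x. \<Sum>i\<in>S. F i x"] by simp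
qed

lemma QS_step:
  assumes U: "open U" and V: "open V" and gUV: "g ` U \<subseteq> V"
    and gs: "\<And>b. b \<in> Basis \<Longrightarrow> smooth_on U (\<lambda>x. g x \<bullet> b)"
    and "QS U V g h"
  shows "(\<forall>x\<in>U. h differentiable (at x)) \<and> (\<forall>v. \<exists>k. QS U V g k \<and> (\<forall>x\<in>U. frechet_derivative h (at x) v = k x))"
  using \<open>QS U V g h\<close>
proof induction
  case (sm f)
  show ?case
  proof (intro conjI allI ballI)
    fix x assume "x \<in> U" then show "f differentiable at x" using smooth_differentiable[OF sm] by blast
  next
    fix v show "\<exists>k. QS U V g k \<and> (\<forall>x\<in>U. frechet_derivative f (at x) v = k x)"
      by (rule exI[of _ "\<lambda>x. frechet_derivative f (at x) v"]) (simp add: QS.sm smooth_D[OF sm])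
  qed
next
  case (cmp f)
  have gd: "(g has_derivative (\<lambda>v. \<Sum>b\<in>Basis. frechet_derivative (\<lambda>x. g x \<bullet> b) (at x) v *\<^sub>R b)) (at x)"
    if x: "x \<in> U" for x
  proof -
    have "((\<lambda>x. \<Sum>b\<in>Basis. (g x \<bullet> b) *\<^sub>R b) has_derivative (\<lambda>v. \<Sum>b\<in>Basis. frechet_derivative (\<lambda>x. g x \<bullet> b) (at x) v *\<^sub>R b)) (at x)"
      apply (intro has_derivative_sum has_derivative_scaleR_left)
      using smooth_differentiable[OF gs x] frechet_derivative_works by blast
    then show ?thesis by (simp add: euclidean_representation)
  qed
  have hd: "((\<lambda>x. f (g x)) has_derivative (\<lambda>v. \<Sum>b\<in>Basis. frechet_derivative (\<lambda>x. g x \<bullet> b) (at x) v * frechet_derivative f (at (g x)) b)) (at x)"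
    if x: "x \<in> U" for x
  proof -
    have fd: "(f has_derivative frechet_derivative f (at (g x))) (at (g x))"
      using smooth_differentiable[OF cmp] gUV x frechet_derivative_works by blast
    have lin: "linear (frechet_derivative f (at (g x)))"
      using fd has_derivative_linear by blast
    have "((\<lambda>x. f (g x)) has_derivative (\<lambda>v. frechet_derivative f (at (g x)) (\<Sum>b\<in>Basis. frechet_derivative (\<lambda>x. g x \<bullet> b) (at x) v *\<^sub>R b))) (at x)"
      using diff_chain_at[OF gd[OF x] fd] by (simp add: o_def)
    moreover have "\<And>v. frechet_derivative f (at (g x)) (\<Sum>b\<in>Basis. frechet_derivative (\<lambda>x. g x \<bullet> b) (at x) v *\<^sub>R b)
       = (\<Sum>b\<in>Basis. frechet_derivative (\<lambda>x. g x \<bullet> b) (at x) v * frechet_derivative f (at (g x)) b)"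
      using lin by (simp add: linear_sum linear_scale)
    ultimately show ?thesis by simp
  qed
  show ?case
  proof (intro conjI allI)
    show "\<forall>x\<in>U. (\<lambda>x. f (g x)) differentiable at x" using hd unfolding differentiable_def by blast
    fix v
    have "QS U V g (\<lambda>x. \<Sum>b\<in>Basis. frechet_derivative (\<lambda>x. g x \<bullet> b) (at x) v * frechet_derivative f (at (g x)) b)"
      apply (rule QS_sum[OF U])
       apply simp
      apply (rule mul)
       apply (rule QS.sm, rule smooth_D, rule gs, assumption)
      apply (rule QS.cmp[where f="\<lambda>y. frechet_derivative f (at y) _"], rule smooth_D, rule cmp)
      done
    then show "\<exists>k. QS U V g k \<and> (\<forall>x\<in>U. frechet_derivative (\<lambda>x. f (g x)) (at x) v = k x)"
      using fd_at[OF hd] by blast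
  qed
next
  case (add a b)
  have hd: "((\<lambda>x. a x + b x) has_derivative (\<lambda>v. frechet_derivative a (at x) v + frechet_derivative b (at x) v)) (at x)"
    if "x \<in> U" for x
    using add that by (intro has_derivative_add) (auto simp: frechet_derivative_works)
  show ?case
  proof (intro conjI allI)
    show "\<forall>x\<in>U. (\<lambda>x. a x + b x) differentiable at x" using hd unfolding differentiable_def by blast
    fix v
    obtain ka kb where "QS U V g ka" "\<forall>x\<in>U. frechet_derivative a (at x) v = ka x"
      "QS U V g kb" "\<forall>x\<in>U. frechet_derivative b (at x) v = kb x" using add by metis
    then show "\<exists>k. QS U V g k \<and> (\<forall>x\<in>U. frechet_derivative (\<lambda>x. a x + b x) (at x) v = k x)"
      using fd_at[OF hd] by (intro exI[of _ "\<lambda>x. ka x + kb x"]) (auto intro: QS.add)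
  qed
next
  case (mul a b)
  have hd: "((\<lambda>x. a x * b x) has_derivative (\<lambda>v. a x * frechet_derivative b (at x) v + frechet_derivative a (at x) v * b x)) (at x)"
    if x: "x \<in> U" for x
  proof -
    have "a differentiable at x" "b differentiable at x" using mul.IH x by auto
    then show ?thesis by (intro has_derivative_mult) (simp_all add: frechet_derivative_works)
  qed
  show ?case
  proof (intro conjI allI)
    show "\<forall>x\<in>U. (\<lambda>x. a x * b x) differentiable at x" using hd unfolding differentiable_def by blast
    fix v
    obtain ka where ka: "QS U V g ka" "\<forall>x\<in>U. frechet_derivative a (at x) v = ka x" using mul.IH(1) by blast
    obtain kb where kb: "QS U V g kb" "\<forall>x\<in>U. frechet_derivative b (at x) v = kb x" using mul.IH(2) by blast
    have "QS U V g (\<lambda>x. a x * kb x + ka x * b x)"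
      by (intro QS.add QS.mul mul.hyps ka(1) kb(1))
    then show "\<exists>k. QS U V g k \<and> (\<forall>x\<in>U. frechet_derivative (\<lambda>x. a x * b x) (at x) v = k x)"
      using fd_at[OF hd] ka(2) kb(2) by (intro exI[of _ "\<lambda>x. a x * kb x + ka x * b x"]) auto
  qed
qed

lemma QS_smooth:
  assumes U: "open U" and V: "open V" and gUV: "g ` U \<subseteq> V"
    and gs: "\<And>b. b \<in> Basis \<Longrightarrow> smooth_on U (\<lambda>x. g x \<bullet> b)"
    and "QS U V g h"
  shows "smooth_on U h"
  by (rule smooth_coinduct[where Q="QS U V g", OF U assms(5)]) (rule QS_step[OF U V gUV gs])

lemma smooth_comp:
  fixes f :: "'b::euclidean_space \<Rightarrow> real" and g :: "'a::real_normed_vector \<Rightarrow> 'b"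
  assumes U: "open U" and V: "open V" and gUV: "g ` U \<subseteq> V"
    and gs: "\<And>b. b \<in> Basis \<Longrightarrow> smooth_on U (\<lambda>x. g x \<bullet> b)"
    and f: "smooth_on V f"
  shows "smooth_on U (\<lambda>x. f (g x))"
  by (rule QS_smooth[OF U V gUV]) (simp_all add: gs QS.cmp[OF f])

lemma smooth_mult:
  fixes U :: "'a::euclidean_space set" and a b :: "'a \<Rightarrow> real"
  assumes U: "open U" and "smooth_on U a" "smooth_on U b"
  shows "smooth_on U (\<lambda>x. a x * b x)"
proof (rule QS_smooth[OF U open_UNIV, where g="\<lambda>x. x"])
  show "\<And>c. c \<in> Basis \<Longrightarrow> smooth_on U (\<lambda>x. x \<bullet> c)"
    using smooth_linear[OF U] bounded_linear_inner_left by blast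
  show "QS U UNIV (\<lambda>x. x) (\<lambda>x. a x * b x)" using assms by (intro QS.mul QS.sm)
qed auto

lemma smooth_add:
  fixes U :: "'a::euclidean_space set" and a b :: "'a \<Rightarrow> real"
  assumes U: "open U" and "smooth_on U a" "smooth_on U b"
  shows "smooth_on U (\<lambda>x. a x + b x)"
proof (rule QS_smooth[OF U open_UNIV, where g="\<lambda>x. x"])
  show "\<And>c. c \<in> Basis \<Longrightarrow> smooth_on U (\<lambda>x. x \<bullet> c)"
    using smooth_linear[OF U] bounded_linear_inner_left by blast
  show "QS U UNIV (\<lambda>x. x) (\<lambda>x. a x + b x)" using assms by (intro QS.add QS.sm)
qed auto

lemma smooth_sum:
  fixes U :: "'a::euclidean_space set" and F :: "'i \<Rightarrow> 'a \<Rightarrow> real"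
  assumes U: "open U" and "finite S" "\<And>i. i \<in> S \<Longrightarrow> smooth_on U (F i)"
  shows "smooth_on U (\<lambda>x. \<Sum>i\<in>S. F i x)"
  using assms(2,3) by (induction S rule: finite_induct) (auto intro: smooth_add smooth_const U)

lemma smooth_uminus:
  fixes U :: "'a::euclidean_space set" and a :: "'a \<Rightarrow> real"
  assumes U: "open U" and "smooth_on U a"
  shows "smooth_on U (\<lambda>x. - a x)"
  using smooth_mult[OF U smooth_const[OF U, of "-1"] assms(2)] by simp

lemma smooth_minus:
  fixes U :: "'a::euclidean_space set" and a b :: "'a \<Rightarrow> real"
  assumes U: "open U" and "smooth_on U a" "smooth_on U b"
  shows "smooth_on U (\<lambda>x. a x - b x)"
  using smooth_add[OF U assms(2) smooth_uminus[OF U assms(3)]] by simp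



lemma smooth_continuous_on: "smooth_on U f \<Longrightarrow> continuous_on U f"
  by (meson continuous_at_imp_continuous_on differentiable_imp_continuous_within smooth_differentiable)

definition Ipar :: "('a \<times> real \<Rightarrow> real) \<Rightarrow> 'a \<Rightarrow> real" where
  "Ipar \<Phi> x = integral {0..1} (\<lambda>s. \<Phi> (x, s))"

lemma Ipar_deriv:
  fixes \<Phi> :: "('a::euclidean_space \<times> real) \<Rightarrow> real"
  assumes U: "open U" "convex U" and T: "open T" "{0..1} \<subseteq> T" and sm: "smooth_on (U \<times> T) \<Phi>"
    and x0: "x0 \<in> U"
  shows "(Ipar \<Phi> has_derivative (\<lambda>v. integral {0..1} (\<lambda>s. frechet_derivative \<Phi> (at (x0, s)) (v, 0)))) (at x0)"
proof -
  define fx where "fx x t = Blinfun (\<lambda>v. frechet_derivative \<Phi> (at (x, t)) (v, 0))" for x t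
  have dPhi: "(\<Phi> has_derivative frechet_derivative \<Phi> (at (x, t))) (at (x, t))" if "x \<in> U" "t \<in> T" for x t
    using smooth_differentiable[OF sm] that frechet_derivative_works by blast
  have bl: "bounded_linear (\<lambda>v. frechet_derivative \<Phi> (at (x, t)) (v, 0))" if "x \<in> U" "t \<in> T" for x t
  proof -
    have "bounded_linear (frechet_derivative \<Phi> (at (x, t)))" using dPhi[OF that] has_derivative_bounded_linear by blast
    then show ?thesis
      using bounded_linear_compose[of "frechet_derivative \<Phi> (at (x, t))" "\<lambda>v. (v, 0::real)"]
        bounded_linear_Pair[OF bounded_linear_ident bounded_linear_zero] by (simp add: o_def)
  qed
  have fxa: "blinfun_apply (fx x t) = (\<lambda>v. frechet_derivative \<Phi> (at (x, t)) (v, 0))" if "x \<in> U" "t \<in> T" for x t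
    unfolding fx_def using bounded_linear_Blinfun_apply[OF bl[OF that]] .
  have opUT: "open (U \<times> T)" using U T by (simp add: open_Times)
  have contPhi: "continuous_on (U \<times> T) \<Phi>" using smooth_continuous_on[OF sm] .
  have cont_fx: "continuous_on (U \<times> cbox 0 1) (\<lambda>(x, t). fx x t)"
  proof (rule continuous_on_blinfun_componentwise)
    fix i :: 'a assume "i \<in> Basis"
    have "continuous_on (U \<times> T) (\<lambda>y. frechet_derivative \<Phi> (at y) (i, 0))"
      using smooth_continuous_on[OF smooth_D[OF sm]] .
    then have "continuous_on (U \<times> cbox 0 1) (\<lambda>y. frechet_derivative \<Phi> (at y) (i, 0))"
      by (rule continuous_on_subset) (use T in \<open>auto simp: cbox_interval\<close>)
    then show "continuous_on (U \<times> cbox 0 1) (\<lambda>y. blinfun_apply (case y of (x, t) \<Rightarrow> fx x t) i)"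
      apply (rule continuous_on_eq)
      using fxa T by (auto simp: cbox_interval)
  qed
  have L: "((\<lambda>x. integral (cbox 0 1) (\<lambda>t. \<Phi> (x, t))) has_derivative blinfun_apply (integral (cbox 0 1) (fx x0))) (at x0 within U)"
  proof (rule leibniz_rule[where f="\<lambda>x t. \<Phi> (x, t)", OF _ _ cont_fx x0 U(2)])
    fix x t assume xt: "x \<in> U" "t \<in> cbox (0::real) 1"
    then have t: "t \<in> T" using T by (auto simp: cbox_interval)
    have "((\<lambda>x. \<Phi> (x, t)) has_derivative (\<lambda>v. frechet_derivative \<Phi> (at (x, t)) (v, 0))) (at x)"
      using diff_chain_at[OF has_derivative_Pair[OF has_derivative_ident has_derivative_const] dPhi[OF xt(1) t]]
      by (simp add: o_def)
    then show "((\<lambda>x. \<Phi> (x, t)) has_derivative blinfun_apply (fx x t)) (at x within U)"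
      using fxa[OF xt(1) t] has_derivative_at_withinI by metis
  next
    fix x assume x: "x \<in> U"
    have "continuous_on {0..1} (\<lambda>t. \<Phi> (x, t))"
      apply (rule continuous_on_compose2[OF contPhi])
      using x T by (auto intro!: continuous_intros)
    then show "(\<lambda>t. \<Phi> (x, t)) integrable_on cbox 0 1"
      by (simp add: cbox_interval integrable_continuous_interval)
  qed
  have cfx0: "continuous_on {0..1} (fx x0)"
    apply (rule continuous_on_compose2[OF cont_fx, where f="\<lambda>t. (x0, t)", simplified])
    using x0 by (auto intro!: continuous_intros simp: cbox_interval)
  have "fx x0 integrable_on {0..1}" by (rule integrable_continuous_interval[OF cfx0])
  then have "blinfun_apply (integral (cbox 0 1) (fx x0)) = (\<lambda>v. integral {0..1} (\<lambda>s. frechet_derivative \<Phi> (at (x0, s)) (v, 0)))"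
    apply (intro ext)
    apply (simp add: cbox_interval blinfun_apply_integral)
    apply (rule integral_cong)
    using fxa x0 T by auto
  with L show ?thesis
    unfolding Ipar_def using at_within_open[OF x0 U(1)] by (simp add: cbox_interval)
qed

lemma Ipar_smooth:
  fixes \<Phi> :: "('a::euclidean_space \<times> real) \<Rightarrow> real"
  assumes U: "open U" "convex U" and T: "open T" "{0..1} \<subseteq> T" and sm: "smooth_on (U \<times> T) \<Phi>"
  shows "smooth_on U (Ipar \<Phi>)"
proof -
  have it: "\<forall>x\<in>U. iter_dderiv (Ipar \<Phi>) vs x = Ipar (iter_dderiv \<Phi> (map (\<lambda>v. (v, 0)) vs)) x" for vs
  proof (induction vs)
    case Nil then show ?case by simp
  next
    case (Cons v vs)
    show ?case
    proof
      fix x assume x: "x \<in> U"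
      let ?P = "iter_dderiv \<Phi> (map (\<lambda>v. (v, 0)) vs)"
      have "iter_dderiv (Ipar \<Phi>) (v # vs) x = frechet_derivative (Ipar ?P) (at x) v"
        using fd_cong[OF U(1) x, of "iter_dderiv (Ipar \<Phi>) vs" "Ipar ?P"] Cons by simp
      also have "\<dots> = integral {0..1} (\<lambda>s. frechet_derivative ?P (at (x, s)) (v, 0))"
        using fd_at[OF Ipar_deriv[OF U T smooth_iter[OF sm] x]] .
      also have "\<dots> = Ipar (iter_dderiv \<Phi> (map (\<lambda>v. (v, 0)) (v # vs))) x"
        by (simp add: Ipar_def)
      finally show "iter_dderiv (Ipar \<Phi>) (v # vs) x = Ipar (iter_dderiv \<Phi> (map (\<lambda>v. (v, 0)) (v # vs))) x" .
    qed
  qed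
  show ?thesis
    unfolding smooth_on_def
  proof (intro allI ballI)
    fix vs x assume x: "x \<in> U"
    have "Ipar (iter_dderiv \<Phi> (map (\<lambda>v. (v, 0)) vs)) differentiable (at x)"
      using Ipar_deriv[OF U T smooth_iter[OF sm] x] differentiable_def by blast
    then show "iter_dderiv (Ipar \<Phi>) vs differentiable (at x)"
      using diff_cong[OF U(1) x, of "iter_dderiv (Ipar \<Phi>) vs"] it by metis
  qed
qed



definition et :: "'n::finite vs" where "et = (1, 0, 0)"

lemma Omega_expand: "Omega a u v = (\<Sum>i\<in>UNIV.
   dp i a * (dq i u * dt v - dq i v * dt u) - dp i u * (dq i a * dt v - dq i v * dt a)
 + dp i v * (dq i a * dt u - dq i u * dt a))"
  unfolding Omega_def wedge3_def by (rule sum.cong) (simp_all add: algebra_simps)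

lemma Omega_e: "Omega a u et = (\<Sum>i\<in>UNIV. dp i a * dq i u - dp i u * dq i a)"
  unfolding Omega_expand by (simp add: et_def dp_def dq_def dt_def)

lemma Omega_fib: "dt u = 0 \<Longrightarrow> dt v = 0 \<Longrightarrow> Omega a u v = dt a * (\<Sum>i\<in>UNIV. dp i u * dq i v - dp i v * dq i u)"
  unfolding Omega_expand sum_distrib_left by (rule sum.cong) (simp_all add: algebra_simps)

lemma linear_Omega1: "linear (\<lambda>a. Omega a u v)"
proof (rule linearI)
  fix b1 b2 :: "'a::finite vs"
  show "Omega (b1 + b2) u v = Omega b1 u v + Omega b2 u v"
    unfolding Omega_expand sum.distrib[symmetric]
    by (rule sum.cong) (simp_all add: dp_def dq_def dt_def algebra_simps)
next
  fix c :: real and b :: "'a::finite vs"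
  show "Omega (c *\<^sub>R b) u v = c *\<^sub>R Omega b u v"
    unfolding Omega_expand real_scaleR_def sum_distrib_left
    by (rule sum.cong) (simp_all add: dp_def dq_def dt_def algebra_simps)
qed

lemma linear_Omega2: "linear (\<lambda>u. Omega a u v)"
proof (rule linearI)
  fix b1 b2 :: "'a::finite vs"
  show "Omega a (b1 + b2) v = Omega a b1 v + Omega a b2 v"
    unfolding Omega_expand sum.distrib[symmetric]
    by (rule sum.cong) (simp_all add: dp_def dq_def dt_def algebra_simps)
next
  fix c :: real and b :: "'a::finite vs"
  show "Omega a (c *\<^sub>R b) v = c *\<^sub>R Omega a b v"
    unfolding Omega_expand real_scaleR_def sum_distrib_left
    by (rule sum.cong) (simp_all add: dp_def dq_def dt_def algebra_simps)
qed

lemma bl_Omega1: "bounded_linear (\<lambda>a. Omega a u v)"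
  using linear_Omega1 linear_conv_bounded_linear by blast

lemma bb_Omega: "bounded_bilinear (\<lambda>a u. Omega a u et)"
  unfolding bilinear_conv_bounded_bilinear[symmetric] bilinear_def
  using linear_Omega1 linear_Omega2 by blast

lemma Omega_key:
  assumes "fst a = 1"
  shows "Omega a u v = Omega a (u - fst u *\<^sub>R et) et * fst v - Omega a (v - fst v *\<^sub>R et) et * fst u
     + snd (snd u) \<bullet> fst (snd v) - snd (snd v) \<bullet> fst (snd u)"
  unfolding Omega_expand Omega_e inner_vec_def sum_distrib_right sum_subtractf[symmetric] sum.distrib[symmetric]
  by (rule sum.cong) (simp_all add: assms et_def dp_def dq_def dt_def algebra_simps)



lemma blI:
  fixes f :: "'a::euclidean_space \<Rightarrow> 'b::real_normed_vector"
  assumes "\<And>a b. f (a + b) = f a + f b" "\<And>c a. f (c *\<^sub>R a) = c *\<^sub>R f a"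
  shows "bounded_linear f"
  using assms linear_conv_bounded_linear linearI by metis

lemma smooth_affine:
  fixes f :: "'a::euclidean_space \<Rightarrow> real"
  assumes "open U" "\<And>a b. f (a + b) = f a + f b" "\<And>c a. f (c *\<^sub>R a) = c *\<^sub>R f a"
  shows "smooth_on U (\<lambda>y. f y + c)"
  by (rule smooth_add[OF assms(1) smooth_linear[OF assms(1) blI[OF assms(2,3)]] smooth_const[OF assms(1)]])

lemma bl_dp: "bounded_linear (dp i)"
  by (rule blI) (simp_all add: dp_def)

lemma bl_dq: "bounded_linear (dq i)"
  by (rule blI) (simp_all add: dq_def)

theorem mainTheorem5:
  fixes W :: "'n::finite vs set" and H :: "'n vs \<Rightarrow> 'n vs"
  assumes "open W"
    and "locally_hamiltonian_form_on W H"
  shows "\<forall>x\<in>W. \<exists>U. open U \<and> x \<in> U \<and> U \<subseteq> W \<and>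
           (\<exists>\<H> :: 'n vs \<Rightarrow> real. smooth_on U \<H> \<and> closed1 U (\<lambda>y. H y - ham_form \<H> y))"
proof (intro ballI)
  fix x0 assume x0W: "x0 \<in> W"
  obtain \<gamma> where can: "canonical_connection_on W \<gamma>"
    and dH: "\<forall>x\<in>W. \<forall>u v. d1 H x u v = contr_Omega \<gamma> x u v" and smH: "smooth_on W H"
    using assms(2) unfolding locally_hamiltonian_form_on_def by blast
  have smg: "smooth_on W \<gamma>" and fst1: "\<And>y. y \<in> W \<Longrightarrow> fst (\<gamma> y) = 1"
    and clos: "\<And>y u v w. y \<in> W \<Longrightarrow> d2 (contr_Omega \<gamma>) y u v w = 0"
    using can unfolding canonical_connection_on_def connection_on_def by auto
  obtain R where R: "R > 0" "ball x0 R \<subseteq> W" using assms(1) x0W open_contains_ball by blast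
  define r where "r = R / 3"
  define U where "U = ball x0 r"
  define T where "T = {-1<..<(2::real)}"
  define P where "P x s = (fst x, snd x0 + s *\<^sub>R (snd x - snd x0))" for x :: "'n vs" and s :: real
  define w where "w x = (0::real, snd x - snd x0)" for x :: "'n vs"
  define \<Phi> where "\<Phi> y = - Omega (\<gamma> (P (fst y) (snd y))) (w (fst y)) et" for y :: "'n vs \<times> real"
  define Ham where "Ham = Ipar \<Phi>"
  have opU: "open U" and cvU: "convex U" and x0U: "x0 \<in> U" and UW: "U \<subseteq> W"
    using R unfolding U_def r_def by auto
  have opT: "open T" and T01: "{0..1} \<subseteq> T" unfolding T_def by auto
  have nfst: "norm (fst z) \<le> norm z" for z :: "'n vs" by (metis norm_fst_le prod.collapse)
  have nsnd: "norm (snd z) \<le> norm z" for z :: "'n vs" by (metis norm_snd_le prod.collapse)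
  have PW: "P x s \<in> W" if "x \<in> U" "s \<in> T" for x s
  proof -
    have nx: "norm (x - x0) < r" using that(1) unfolding U_def by (simp add: dist_norm norm_minus_commute)
    have s2: "\<bar>s\<bar> \<le> 2" using that(2) unfolding T_def by auto
    have eq: "P x s - x0 = (fst (x - x0), s *\<^sub>R snd (x - x0))" unfolding P_def by (simp add: prod_eq_iff)
    have "norm (P x s - x0) \<le> norm (fst (x - x0)) + norm (s *\<^sub>R snd (x - x0))"
      unfolding eq by (rule norm_Pair_le)
    also have "\<dots> \<le> norm (x - x0) + 2 * norm (x - x0)"
    proof -
      have "\<bar>s\<bar> * norm (snd (x - x0)) \<le> 2 * norm (x - x0)"
        by (rule mult_mono) (use s2 nsnd[of "x - x0"] in auto)
      then show ?thesis using nfst[of "x - x0"] by simp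
    qed
    also have "\<dots> < R" using nx unfolding r_def by simp
    finally have "P x s \<in> ball x0 R" by (simp add: dist_norm norm_minus_commute)
    then show ?thesis using R(2) by blast
  qed
  have Dg: "(\<gamma> has_derivative frechet_derivative \<gamma> (at y)) (at y)" if "y \<in> W" for y
    using smooth_differentiable[OF smg that] frechet_derivative_works by blast
  have fstD: "fst (frechet_derivative \<gamma> (at y) c) = 0" if "y \<in> W" for y c
  proof -
    have a: "((\<lambda>z. fst (\<gamma> z)) has_derivative (\<lambda>c. fst (frechet_derivative \<gamma> (at y) c))) (at y)"
      using has_derivative_fst[OF Dg[OF that]] .
    have "((\<lambda>z. 1::real) has_derivative (\<lambda>c. 0)) (at y)" by (rule has_derivative_const)
    then have b: "((\<lambda>z. fst (\<gamma> z)) has_derivative (\<lambda>c. 0)) (at y)"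
      by (rule has_derivative_transform_within_open[OF _ assms(1) that]) (simp add: fst1)
    show ?thesis using has_derivative_unique[OF a b] by metis
  qed
  have closed: "Omega (frechet_derivative \<gamma> (at y) u) v et = Omega (frechet_derivative \<gamma> (at y) v) u et"
    if "y \<in> W" "fst u = 0" "fst v = 0" for y u v
  proof -
    have fdO: "frechet_derivative (\<lambda>z. contr_Omega \<gamma> z a b) (at y) c = Omega (frechet_derivative \<gamma> (at y) c) a b" for a b c
      unfolding contr_Omega_def
      using fd_at[OF bounded_linear.has_derivative[OF bl_Omega1 Dg[OF that(1)]]] .
    have z: "Omega (frechet_derivative \<gamma> (at y) et) u v = 0"
      using Omega_fib[of u v] that fstD[OF that(1)] by (simp add: dt_def)
    show ?thesis using clos[OF that(1), of u v et] unfolding d2_def fdO z by simp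
  qed
  have opUT: "open (U \<times> T)" using opU opT by (simp add: open_Times)
  define g where "g y = P (fst y) (snd y)" for y :: "'n vs \<times> real"
  have gUV: "g ` (U \<times> T) \<subseteq> W" using PW unfolding g_def by auto
  have gs: "smooth_on (U \<times> T) (\<lambda>y. g y \<bullet> b)" for b :: "'n vs"
  proof -
    have s1: "smooth_on (U \<times> T) (\<lambda>y. fst (fst y) * fst b + snd x0 \<bullet> snd b)"
      by (rule smooth_affine[OF opUT]) (simp_all add: algebra_simps)
    have s2: "smooth_on (U \<times> T) (\<lambda>y::'n vs \<times> real. snd y)"
      by (rule smooth_linear[OF opUT]) (rule blI, simp_all)
    have s3: "smooth_on (U \<times> T) (\<lambda>y. snd (fst y) \<bullet> snd b + - (snd x0 \<bullet> snd b))"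
      by (rule smooth_affine[OF opUT]) (simp_all add: algebra_simps inner_add_left)
    have s4: "smooth_on (U \<times> T) (\<lambda>y. (fst (fst y) * fst b + snd x0 \<bullet> snd b) + snd y * (snd (fst y) \<bullet> snd b + - (snd x0 \<bullet> snd b)))"
      by (rule smooth_add[OF opUT s1 smooth_mult[OF opUT s2 s3]])
    show ?thesis
      by (rule smooth_cong[OF opUT _ s4]) (simp add: g_def P_def inner_prod_def inner_add_left inner_diff_left algebra_simps)
  qed
  have c1: "smooth_on (U \<times> T) (\<lambda>y. dp i (\<gamma> (g y)))" for i
    by (rule smooth_comp[OF opUT assms(1) gUV gs smooth_lin_post[OF assms(1) bl_dp smg]])
  have c2: "smooth_on (U \<times> T) (\<lambda>y. dq i (\<gamma> (g y)))" for i
    by (rule smooth_comp[OF opUT assms(1) gUV gs smooth_lin_post[OF assms(1) bl_dq smg]])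
  have a1: "smooth_on (U \<times> T) (\<lambda>y. dq i (w (fst y)))" for i
  proof -
    have "smooth_on (U \<times> T) (\<lambda>y. fst (snd (fst y)) $ i + - (fst (snd x0) $ i))"
      by (rule smooth_affine[OF opUT]) simp_all
    then show ?thesis by (rule smooth_cong[OF opUT, rotated]) (simp add: w_def dq_def)
  qed
  have a2: "smooth_on (U \<times> T) (\<lambda>y. dp i (w (fst y)))" for i
  proof -
    have "smooth_on (U \<times> T) (\<lambda>y. snd (snd (fst y)) $ i + - (snd (snd x0) $ i))"
      by (rule smooth_affine[OF opUT]) simp_all
    then show ?thesis by (rule smooth_cong[OF opUT, rotated]) (simp add: w_def dp_def)
  qed
  have smPhi: "smooth_on (U \<times> T) \<Phi>"
  proof -
    have "smooth_on (U \<times> T) (\<lambda>y. - (\<Sum>i\<in>UNIV. dp i (\<gamma> (g y)) * dq i (w (fst y)) - dp i (w (fst y)) * dq i (\<gamma> (g y))))"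
      by (rule smooth_uminus[OF opUT], rule smooth_sum[OF opUT], simp,
          intro smooth_minus[OF opUT] smooth_mult[OF opUT] c1 c2 a1 a2)
    then show ?thesis unfolding \<Phi>_def Omega_e g_def .
  qed
  have dPhi: "frechet_derivative \<Phi> (at (x, s)) (v, 0) =
      - (s * Omega (frechet_derivative \<gamma> (at (P x s)) v) (w x) et + Omega (\<gamma> (P x s)) v et)"
    if "x \<in> U" "s \<in> T" "fst v = 0" for x s v
  proof -
    have PWx: "P x s \<in> W" using PW that by blast
    have dP: "((\<lambda>x'. P x' s) has_derivative (\<lambda>v. (fst v, s *\<^sub>R snd v))) (at x)"
      unfolding P_def by (auto intro!: derivative_eq_intros)
    have dgP: "((\<lambda>x'. \<gamma> (P x' s)) has_derivative (\<lambda>v. frechet_derivative \<gamma> (at (P x s)) (fst v, s *\<^sub>R snd v))) (at x)"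
      using diff_chain_at[OF dP Dg[OF PWx]] by (simp add: o_def)
    have dw: "(w has_derivative (\<lambda>v. (0, snd v))) (at x)"
      unfolding w_def by (auto intro!: derivative_eq_intros)
    have dS: "((\<lambda>x'. \<Phi> (x', s)) has_derivative (\<lambda>v. - (Omega (\<gamma> (P x s)) (0, snd v) et
        + Omega (frechet_derivative \<gamma> (at (P x s)) (fst v, s *\<^sub>R snd v)) (w x) et))) (at x)"
      unfolding \<Phi>_def fst_conv snd_conv
      by (rule has_derivative_minus[OF bounded_bilinear.FDERIV[OF bb_Omega dgP dw]])
    have dPhi0: "(\<Phi> has_derivative frechet_derivative \<Phi> (at (x, s))) (at (x, s))"
      using smooth_differentiable[OF smPhi] that frechet_derivative_works by blast
    have dS2: "((\<lambda>x'. \<Phi> (x', s)) has_derivative (\<lambda>v. frechet_derivative \<Phi> (at (x, s)) (v, 0))) (at x)"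
      using diff_chain_at[OF has_derivative_Pair[OF has_derivative_ident has_derivative_const] dPhi0]
      by (simp add: o_def)
    have "frechet_derivative \<Phi> (at (x, s)) (v, 0) = - (Omega (\<gamma> (P x s)) (0, snd v) et
        + Omega (frechet_derivative \<gamma> (at (P x s)) (fst v, s *\<^sub>R snd v)) (w x) et)"
      using fun_cong[OF has_derivative_unique[OF dS2 dS], of v] by simp
    moreover have "(0, snd v) = v" "(fst v, s *\<^sub>R snd v) = s *\<^sub>R v" using that(3) by (auto simp: prod_eq_iff)
    moreover have "frechet_derivative \<gamma> (at (P x s)) (s *\<^sub>R v) = s *\<^sub>R frechet_derivative \<gamma> (at (P x s)) v"
      using has_derivative_linear[OF Dg[OF PWx]] linear_cmul by blast
    moreover have "Omega (s *\<^sub>R a) b et = s * Omega a b et" for a b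
      using linear_cmul[OF linear_Omega1, of s a b et] by simp
    ultimately show ?thesis by simp
  qed
  have ftc: "integral {0..1} (\<lambda>s. s * Omega (frechet_derivative \<gamma> (at (P x s)) (w x)) v et + Omega (\<gamma> (P x s)) v et)
      = Omega (\<gamma> x) v et" if "x \<in> U" for x v
  proof -
    have dF: "((\<lambda>s. s * Omega (\<gamma> (P x s)) v et) has_vector_derivative
        (s * Omega (frechet_derivative \<gamma> (at (P x s)) (w x)) v et + Omega (\<gamma> (P x s)) v et)) (at s within {0..1})"
      if s: "s \<in> {0..1}" for s
    proof -
      have PWx: "P x s \<in> W" using PW \<open>x \<in> U\<close> s T01 by blast
      have dPs: "((\<lambda>s. P x s) has_derivative (\<lambda>h. h *\<^sub>R w x)) (at s)"
        unfolding P_def w_def by (rule derivative_eq_intros | simp)+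
      have dg: "((\<lambda>s. \<gamma> (P x s)) has_derivative (\<lambda>h. frechet_derivative \<gamma> (at (P x s)) (h *\<^sub>R w x))) (at s)"
        using diff_chain_at[OF dPs Dg[OF PWx]] by (simp add: o_def)
      have dO: "((\<lambda>s. Omega (\<gamma> (P x s)) v et) has_derivative (\<lambda>h. Omega (frechet_derivative \<gamma> (at (P x s)) (h *\<^sub>R w x)) v et)) (at s)"
        by (rule bounded_linear.has_derivative[OF bl_Omega1 dg])
      have dM: "((\<lambda>s. s * Omega (\<gamma> (P x s)) v et) has_derivative
          (\<lambda>h. s * Omega (frechet_derivative \<gamma> (at (P x s)) (h *\<^sub>R w x)) v et + h * Omega (\<gamma> (P x s)) v et)) (at s)"
        using has_derivative_mult[OF has_derivative_ident dO] by simp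
      have lin1: "frechet_derivative \<gamma> (at (P x s)) (h *\<^sub>R w x) = h *\<^sub>R frechet_derivative \<gamma> (at (P x s)) (w x)" for h
        using has_derivative_linear[OF Dg[OF PWx]] linear_cmul by blast
      have lin2: "Omega (h *\<^sub>R a) b et = h * Omega a b et" for h a b
        using linear_cmul[OF linear_Omega1, of h a b et] by simp
      have eqf: "(\<lambda>h. s * Omega (frechet_derivative \<gamma> (at (P x s)) (h *\<^sub>R w x)) v et + h * Omega (\<gamma> (P x s)) v et)
          = (\<lambda>h. h *\<^sub>R (s * Omega (frechet_derivative \<gamma> (at (P x s)) (w x)) v et + Omega (\<gamma> (P x s)) v et))"
        by (simp add: lin1 lin2 algebra_simps)
      show ?thesis unfolding has_vector_derivative_def
        by (rule has_derivative_at_withinI) (use dM in \<open>simp only: eqf\<close>)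
    qed
    have "((\<lambda>s. s * Omega (frechet_derivative \<gamma> (at (P x s)) (w x)) v et + Omega (\<gamma> (P x s)) v et)
        has_integral (1 * Omega (\<gamma> (P x 1)) v et - 0 * Omega (\<gamma> (P x 0)) v et)) {0..1}"
      by (rule fundamental_theorem_of_calculus) (use dF in auto)
    then have "integral {0..1} (\<lambda>s. s * Omega (frechet_derivative \<gamma> (at (P x s)) (w x)) v et + Omega (\<gamma> (P x s)) v et)
       = 1 * Omega (\<gamma> (P x 1)) v et - 0 * Omega (\<gamma> (P x 0)) v et" by (rule integral_unique)
    moreover have "P x 1 = x" unfolding P_def by simp
    ultimately show ?thesis by simp
  qed
  have HamD: "(Ham has_derivative (\<lambda>v. integral {0..1} (\<lambda>s. frechet_derivative \<Phi> (at (x, s)) (v, 0)))) (at x)"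
    if "x \<in> U" for x
    unfolding Ham_def by (rule Ipar_deriv[OF opU cvU opT T01 smPhi that])
  have fib: "frechet_derivative Ham (at x) v = - Omega (\<gamma> x) v et" if "x \<in> U" "fst v = 0" for x v
  proof -
    have "frechet_derivative Ham (at x) v = integral {0..1} (\<lambda>s. frechet_derivative \<Phi> (at (x, s)) (v, 0))"
      by (rule fd_at[OF HamD[OF that(1)]])
    also have "\<dots> = integral {0..1} (\<lambda>s. - (s * Omega (frechet_derivative \<gamma> (at (P x s)) (w x)) v et + Omega (\<gamma> (P x s)) v et))"
    proof (rule integral_cong)
      fix s :: real assume "s \<in> {0..1}"
      then have sT: "s \<in> T" using T01 by blast
      have "Omega (frechet_derivative \<gamma> (at (P x s)) v) (w x) et = Omega (frechet_derivative \<gamma> (at (P x s)) (w x)) v et"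
        by (rule closed[OF PW[OF that(1) sT] that(2)]) (simp add: w_def)
      then show "frechet_derivative \<Phi> (at (x, s)) (v, 0) = - (s * Omega (frechet_derivative \<gamma> (at (P x s)) (w x)) v et + Omega (\<gamma> (P x s)) v et)"
        using dPhi[OF that(1) sT that(2)] by simp
    qed
    also have "\<dots> = - Omega (\<gamma> x) v et"
      unfolding integral_neg using ftc[OF that(1), of v] by (simp only:)
    finally show ?thesis .
  qed
  have smHam: "smooth_on U Ham"
    unfolding Ham_def by (rule Ipar_smooth[OF opU cvU opT T01 smPhi])
  have cl: "closed1 U (\<lambda>y. H y - ham_form Ham y)"
    unfolding closed1_def
  proof (intro ballI allI)
    fix x u v assume x: "x \<in> U"
    have xW: "x \<in> W" using x UW by blast
    let ?D = "frechet_derivative Ham (at x)"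
    let ?DH = "frechet_derivative H (at x)"
    have dHx: "(H has_derivative ?DH) (at x)"
      using smooth_differentiable[OF smH xW] frechet_derivative_works by blast
    have dHam: "(Ham has_derivative ?D) (at x)"
      using smooth_differentiable[OF smHam x] frechet_derivative_works by blast
    have dham: "((\<lambda>y. ham_form Ham y) has_derivative (\<lambda>u. (- ?D u, snd (snd u), 0))) (at x)"
      unfolding ham_form_def
      by (rule has_derivative_Pair[OF has_derivative_minus[OF dHam]
            has_derivative_Pair[OF has_derivative_snd[OF has_derivative_snd[OF has_derivative_ident]] has_derivative_const]])
    have dtot: "((\<lambda>y. H y - ham_form Ham y) has_derivative (\<lambda>u. ?DH u - (- ?D u, snd (snd u), 0))) (at x)"
      by (rule has_derivative_diff[OF dHx dham])
    have lin: "linear ?D" using has_derivative_linear[OF dHam] .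
    have Dgen: "?D z = - Omega (\<gamma> x) (z - fst z *\<^sub>R et) et + fst z * ?D et" for z
    proof -
      have "?D ((z - fst z *\<^sub>R et) + fst z *\<^sub>R et) = ?D (z - fst z *\<^sub>R et) + fst z * ?D et"
        by (simp only: linear_add[OF lin] linear_cmul[OF lin] real_scaleR_def)
      then have "?D z = ?D (z - fst z *\<^sub>R et) + fst z * ?D et" by simp
      also have "?D (z - fst z *\<^sub>R et) = - Omega (\<gamma> x) (z - fst z *\<^sub>R et) et"
        by (rule fib[OF x]) (simp add: et_def)
      finally show ?thesis .
    qed
    have d1H: "?DH u \<bullet> v - ?DH v \<bullet> u = Omega (\<gamma> x) u v"
      using dH xW unfolding d1_def contr_Omega_def by blast
    have key: "Omega (\<gamma> x) u v = Omega (\<gamma> x) (u - fst u *\<^sub>R et) et * fst v - Omega (\<gamma> x) (v - fst v *\<^sub>R et) et * fst u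
     + snd (snd u) \<bullet> fst (snd v) - snd (snd v) \<bullet> fst (snd u)"
      by (rule Omega_key[OF fst1[OF xW]])
    have Du: "?D u = - Omega (\<gamma> x) (u - fst u *\<^sub>R et) et + fst u * ?D et" by (rule Dgen)
    have Dv: "?D v = - Omega (\<gamma> x) (v - fst v *\<^sub>R et) et + fst v * ?D et" by (rule Dgen)
    show "d1 (\<lambda>y. H y - ham_form Ham y) x u v = 0"
      unfolding d1_def fd_at[OF dtot] inner_diff_left
      unfolding Du Dv
      using d1H key
      by (simp add: inner_prod_def algebra_simps)
  qed
  show "\<exists>U. open U \<and> x0 \<in> U \<and> U \<subseteq> W \<and>
           (\<exists>\<H> :: 'n vs \<Rightarrow> real. smooth_on U \<H> \<and> closed1 U (\<lambda>y. H y - ham_form \<H> y))"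
    using opU x0U UW smHam cl by blast
qed

end
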